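(* Let $H$ be a hypergraph, $k$ a positive integer, and $H_1,H_2$ hypergraphs with $H=H_1\cup H_2$, and let $S$ be a set with $V(H_1)\cap V(H_2)\subseteq S$ and $S\subseteq V(H_1)\cap V(H_2)$. Let $A_1,\dots,A_k\in tr_S(i(H))$ be such that $A_1\cup\dots\cup A_k\supseteq S$. Then the following are equivalent: (1) $f_H^S(A_1,\dots,A_k)=1$; (2) there exist $A_i^j\in tr_S(i(H_j))$ for $i\in[k]$, $j\in[2]$ such that $A_i\subseteq A_i^1\cap A_i^2$ for all $i$, and $f_{H_j}^S(A_1^j,\dots,A_k^j)=1$ for $j=1,2$.
   Context: A hypergraph $H$ has a finite vertex set $V(H)$ and a set $E(H)$ of subsets of $V(H)$. A set of vertices is independent if it contains no edge; $i(H)$ is the family of inclusion-wise maximal independent sets of $H$. $H=H_1\cup H_2$ means $V(H)=V(H_1)\cup V(H_2)$ and $E(H)=E(H_1)\cup E(H_2)$. For a family $\mathcal{F}$, $tr_S(\mathcal{F})=\{F\cap S:F\in\mathcal{F}\}$. For a hypergraph $H$ and $S\subseteq V(H)$, define $f_H^S(A_1,\dots,A_k)=1$ if $A_1\cup\dots\cup A_k\supseteq S$ and there exist $I_1,\dots,I_k\in i(H)$ with $I_1\cup\dots\cup I_k=V(H)$ and $A_i\subseteq I_i$ for all $i$; and $f_H^S(A_1,\dots,A_k)=0$ otherwise. *)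

theory Defs
  imports Main
begin

definition hypergraph :: "'a set \<Rightarrow> 'a set set \<Rightarrow> bool" where
  "hypergraph V E \<longleftrightarrow> finite V \<and> (\<forall>e\<in>E. e \<subseteq> V)"

definition independent :: "'a set \<Rightarrow> 'a set set \<Rightarrow> 'a set \<Rightarrow> bool" where
  "independent V E I \<longleftrightarrow> I \<subseteq> V \<and> (\<forall>e\<in>E. \<not> e \<subseteq> I)"

definition max_indep :: "'a set \<Rightarrow> 'a set set \<Rightarrow> 'a set set" where
  "max_indep V E = {I. independent V E I \<and> (\<forall>J. independent V E J \<and> I \<subseteq> J \<longrightarrow> J = I)}"

definition tr :: "'a set \<Rightarrow> 'a set set \<Rightarrow> 'a set set" where
  "tr S F = (\<lambda>X. X \<inter> S) ` F"

definition fHS :: "'a set \<Rightarrow> 'a set set \<Rightarrow> 'a set \<Rightarrow> nat \<Rightarrow> (nat \<Rightarrow> 'a set) \<Rightarrow> nat" where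
  "fHS V E S k A = (if S \<subseteq> (\<Union>i\<in>{1..k}. A i) \<and>
      (\<exists>I. (\<forall>i\<in>{1..k}. I i \<in> max_indep V E \<and> A i \<subseteq> I i) \<and> (\<Union>i\<in>{1..k}. I i) = V)
    then 1 else 0)"

end

theory Submission
  imports Defs
begin

lemma extend_max:
  assumes fin: "finite V" and ind: "independent V E I"
  shows "\<exists>J. J \<in> max_indep V E \<and> I \<subseteq> J"
proof -
  let ?C = "{J. independent V E J \<and> I \<subseteq> J}"
  have "?C \<subseteq> Pow V" by (auto simp: independent_def)
  hence fC: "finite ?C" using fin finite_subset by blast
  have "I \<in> ?C" using ind by auto
  then obtain m where m: "m \<in> ?C" "I \<subseteq> m" "\<forall>b\<in>?C. m \<subseteq> b \<longrightarrow> m = b"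
    using finite_has_maximal2[OF fC] by blast
  have "m \<in> max_indep V E"
    unfolding max_indep_def using m by auto
  thus ?thesis using m by blast
qed

lemma max_indep_sub: "J \<in> max_indep V E \<Longrightarrow> J \<subseteq> V"
  by (simp add: max_indep_def independent_def)

lemma max_indep_ind: "J \<in> max_indep V E \<Longrightarrow> independent V E J"
  by (simp add: max_indep_def)

lemma fHS_eq1:
  "fHS V E S k A = 1 \<longleftrightarrow> (S \<subseteq> (\<Union>i\<in>{1..k}. A i) \<and>
      (\<exists>I. (\<forall>i\<in>{1..k}. I i \<in> max_indep V E \<and> A i \<subseteq> I i) \<and> (\<Union>i\<in>{1..k}. I i) = V))"
  (is "_ \<longleftrightarrow> ?c")
proof (cases ?c)
  case True
  have "(if ?c then 1 else 0) = (1::nat)" using True by (rule if_P)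
  then show ?thesis using True unfolding fHS_def by blast
next
  case False
  have "(if ?c then 1 else 0) = (0::nat)" using False by (rule if_not_P)
  then show ?thesis using False unfolding fHS_def by (metis zero_neq_one)
qed

theorem mainTheorem10:
  fixes V1 V2 S :: "'a set" and E1 E2 :: "'a set set" and k :: nat and A :: "nat \<Rightarrow> 'a set"
  assumes "hypergraph V1 E1" and "hypergraph V2 E2"
    and "k > 0"
    and "V1 \<inter> V2 \<subseteq> S" and "S \<subseteq> V1 \<inter> V2"
    and "\<forall>i\<in>{1..k}. A i \<in> tr S (max_indep (V1 \<union> V2) (E1 \<union> E2))"
    and "S \<subseteq> (\<Union>i\<in>{1..k}. A i)"
  shows "fHS (V1 \<union> V2) (E1 \<union> E2) S k A = 1 \<longleftrightarrow>
    (\<exists>A1 A2. (\<forall>i\<in>{1..k}. A1 i \<in> tr S (max_indep V1 E1) \<and> A2 i \<in> tr S (max_indep V2 E2)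
                 \<and> A i \<subseteq> A1 i \<inter> A2 i)
      \<and> fHS V1 E1 S k A1 = 1 \<and> fHS V2 E2 S k A2 = 1)"
proof
  have f1: "finite V1" and f2: "finite V2" and fU: "finite (V1 \<union> V2)"
    using assms(1,2) by (auto simp: hypergraph_def)
  have AS: "\<forall>i\<in>{1..k}. A i \<subseteq> S" using assms(6) by (auto simp: tr_def)
  {
    assume "fHS (V1 \<union> V2) (E1 \<union> E2) S k A = 1"
    hence "\<exists>I. (\<forall>i\<in>{1..k}. I i \<in> max_indep (V1 \<union> V2) (E1 \<union> E2) \<and> A i \<subseteq> I i)
      \<and> (\<Union>i\<in>{1..k}. I i) = V1 \<union> V2"
      unfolding fHS_eq1 by (rule conjunct2)
    then obtain I where I: "\<forall>i\<in>{1..k}. I i \<in> max_indep (V1 \<union> V2) (E1 \<union> E2) \<and> A i \<subseteq> I i"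
      and IU: "(\<Union>i\<in>{1..k}. I i) = V1 \<union> V2" by blast
    have "\<forall>i\<in>{1..k}. \<exists>J. J \<in> max_indep V1 E1 \<and> I i \<inter> V1 \<subseteq> J"
    proof
      fix i assume "i \<in> {1..k}"
      hence "independent (V1 \<union> V2) (E1 \<union> E2) (I i)" using I max_indep_ind by blast
      hence "independent V1 E1 (I i \<inter> V1)" by (auto simp: independent_def)
      thus "\<exists>J. J \<in> max_indep V1 E1 \<and> I i \<inter> V1 \<subseteq> J" using extend_max[OF f1] by blast
    qed
    from bchoice[OF this] obtain J1 where J1: "\<forall>i\<in>{1..k}. J1 i \<in> max_indep V1 E1 \<and> I i \<inter> V1 \<subseteq> J1 i"
      by blast
    have "\<forall>i\<in>{1..k}. \<exists>J. J \<in> max_indep V2 E2 \<and> I i \<inter> V2 \<subseteq> J"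
    proof
      fix i assume "i \<in> {1..k}"
      hence "independent (V1 \<union> V2) (E1 \<union> E2) (I i)" using I max_indep_ind by blast
      hence "independent V2 E2 (I i \<inter> V2)" by (auto simp: independent_def)
      thus "\<exists>J. J \<in> max_indep V2 E2 \<and> I i \<inter> V2 \<subseteq> J" using extend_max[OF f2] by blast
    qed
    from bchoice[OF this] obtain J2 where J2: "\<forall>i\<in>{1..k}. J2 i \<in> max_indep V2 E2 \<and> I i \<inter> V2 \<subseteq> J2 i"
      by blast
    have J1sub: "\<forall>i\<in>{1..k}. J1 i \<subseteq> V1" using J1 max_indep_sub by blast
    have J2sub: "\<forall>i\<in>{1..k}. J2 i \<subseteq> V2" using J2 max_indep_sub by blast
    let ?A1 = "\<lambda>i. J1 i \<inter> S" and ?A2 = "\<lambda>i. J2 i \<inter> S"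
    have c1: "\<forall>i\<in>{1..k}. ?A1 i \<in> tr S (max_indep V1 E1) \<and> ?A2 i \<in> tr S (max_indep V2 E2)
                 \<and> A i \<subseteq> ?A1 i \<inter> ?A2 i"
    proof
      fix i assume i: "i \<in> {1..k}"
      have m1: "J1 i \<in> max_indep V1 E1" and s1: "I i \<inter> V1 \<subseteq> J1 i" using J1 i by auto
      have m2: "J2 i \<in> max_indep V2 E2" and s2: "I i \<inter> V2 \<subseteq> J2 i" using J2 i by auto
      have a: "A i \<subseteq> I i" "A i \<subseteq> S" using I AS i by auto
      have "A i \<subseteq> ?A1 i \<inter> ?A2 i" using a s1 s2 assms(5) by blast
      moreover have "?A1 i \<in> tr S (max_indep V1 E1)" unfolding tr_def using m1 by (rule imageI)
      moreover have "?A2 i \<in> tr S (max_indep V2 E2)" unfolding tr_def using m2 by (rule imageI)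
      ultimately show "?A1 i \<in> tr S (max_indep V1 E1) \<and> ?A2 i \<in> tr S (max_indep V2 E2)
                 \<and> A i \<subseteq> ?A1 i \<inter> ?A2 i" by blast
    qed
    have U1: "(\<Union>i\<in>{1..k}. J1 i) = V1"
    proof
      show "(\<Union>i\<in>{1..k}. J1 i) \<subseteq> V1" using J1sub by blast
      show "V1 \<subseteq> (\<Union>i\<in>{1..k}. J1 i)"
      proof
        fix x assume x: "x \<in> V1"
        then obtain i where i: "i \<in> {1..k}" "x \<in> I i" using IU by blast
        hence "x \<in> J1 i" using J1 x by blast
        thus "x \<in> (\<Union>i\<in>{1..k}. J1 i)" using i by blast
      qed
    qed
    have U2: "(\<Union>i\<in>{1..k}. J2 i) = V2"
    proof
      show "(\<Union>i\<in>{1..k}. J2 i) \<subseteq> V2" using J2sub by blast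
      show "V2 \<subseteq> (\<Union>i\<in>{1..k}. J2 i)"
      proof
        fix x assume x: "x \<in> V2"
        then obtain i where i: "i \<in> {1..k}" "x \<in> I i" using IU by blast
        hence "x \<in> J2 i" using J2 x by blast
        thus "x \<in> (\<Union>i\<in>{1..k}. J2 i)" using i by blast
      qed
    qed
    have S1: "S \<subseteq> (\<Union>i\<in>{1..k}. ?A1 i)" using assms(7) c1 by blast
    have S2: "S \<subseteq> (\<Union>i\<in>{1..k}. ?A2 i)" using assms(7) c1 by blast
    have "fHS V1 E1 S k ?A1 = 1" unfolding fHS_eq1 using S1 J1 U1
      by (intro conjI exI[of _ J1]) auto
    moreover have "fHS V2 E2 S k ?A2 = 1" unfolding fHS_eq1 using S2 J2 U2
      by (intro conjI exI[of _ J2]) auto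
    ultimately show "\<exists>A1 A2. (\<forall>i\<in>{1..k}. A1 i \<in> tr S (max_indep V1 E1) \<and> A2 i \<in> tr S (max_indep V2 E2)
                 \<and> A i \<subseteq> A1 i \<inter> A2 i)
      \<and> fHS V1 E1 S k A1 = 1 \<and> fHS V2 E2 S k A2 = 1" using c1
      by (intro exI[where x="?A1"] exI[where x="?A2"] conjI) blast+
  }
  {
    assume "\<exists>A1 A2. (\<forall>i\<in>{1..k}. A1 i \<in> tr S (max_indep V1 E1) \<and> A2 i \<in> tr S (max_indep V2 E2)
                 \<and> A i \<subseteq> A1 i \<inter> A2 i)
      \<and> fHS V1 E1 S k A1 = 1 \<and> fHS V2 E2 S k A2 = 1"
    then obtain A1 A2 where c: "\<forall>i\<in>{1..k}. A1 i \<in> tr S (max_indep V1 E1) \<and> A2 i \<in> tr S (max_indep V2 E2)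
                 \<and> A i \<subseteq> A1 i \<inter> A2 i" and h1: "fHS V1 E1 S k A1 = 1" and h2: "fHS V2 E2 S k A2 = 1"
      by blast
    obtain J1 where J1: "\<forall>i\<in>{1..k}. J1 i \<in> max_indep V1 E1 \<and> A1 i \<subseteq> J1 i"
      and U1: "(\<Union>i\<in>{1..k}. J1 i) = V1"
      using h1 unfolding fHS_eq1 by blast
    obtain J2 where J2: "\<forall>i\<in>{1..k}. J2 i \<in> max_indep V2 E2 \<and> A2 i \<subseteq> J2 i"
      and U2: "(\<Union>i\<in>{1..k}. J2 i) = V2"
      using h2 unfolding fHS_eq1 by blast
    let ?K = "\<lambda>i. (J1 i - S) \<union> (J2 i - S) \<union> A i"
    have "\<forall>i\<in>{1..k}. \<exists>I. I \<in> max_indep (V1 \<union> V2) (E1 \<union> E2) \<and> ?K i \<subseteq> I"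
    proof
      fix i assume i: "i \<in> {1..k}"
      have j1: "independent V1 E1 (J1 i)" and j2: "independent V2 E2 (J2 i)"
        using J1 J2 i max_indep_ind by blast+
      have a1: "A i \<subseteq> J1 i" and a2: "A i \<subseteq> J2 i" using c J1 J2 i by blast+
      have "independent (V1 \<union> V2) (E1 \<union> E2) (?K i)"
        unfolding independent_def
      proof (intro conjI ballI)
        show "?K i \<subseteq> V1 \<union> V2" using j1 j2 a1 unfolding independent_def by blast
      next
        fix e assume e: "e \<in> E1 \<union> E2"
        show "\<not> e \<subseteq> ?K i"
        proof
          assume sub: "e \<subseteq> ?K i"
          show False
          proof (cases "e \<in> E1")
            case True
            have eV: "e \<subseteq> V1" using assms(1) True unfolding hypergraph_def by blast
            have J2V: "J2 i \<subseteq> V2" using j2 unfolding independent_def by (rule conjunct1)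
            have "e \<subseteq> J1 i"
            proof
              fix x assume "x \<in> e"
              hence "x \<in> V1" "x \<in> ?K i" using eV sub by blast+
              thus "x \<in> J1 i" using a1 J2V assms(4) by blast
            qed
            moreover have "\<forall>e\<in>E1. \<not> e \<subseteq> J1 i" using j1 unfolding independent_def by (rule conjunct2)
            ultimately show False using True by blast
          next
            case False
            hence E: "e \<in> E2" using e by blast
            have eV: "e \<subseteq> V2" using assms(2) E unfolding hypergraph_def by blast
            have J1V: "J1 i \<subseteq> V1" using j1 unfolding independent_def by (rule conjunct1)
            have "e \<subseteq> J2 i"
            proof
              fix x assume "x \<in> e"
              hence "x \<in> V2" "x \<in> ?K i" using eV sub by blast+
              thus "x \<in> J2 i" using a2 J1V assms(4) by blast
            qed
            moreover have "\<forall>e\<in>E2. \<not> e \<subseteq> J2 i" using j2 unfolding independent_def by (rule conjunct2)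
            ultimately show False using E by blast
          qed
        qed
      qed
      thus "\<exists>I. I \<in> max_indep (V1 \<union> V2) (E1 \<union> E2) \<and> ?K i \<subseteq> I" using extend_max[OF fU] by blast
    qed
    from bchoice[OF this] obtain I where I: "\<forall>i\<in>{1..k}. I i \<in> max_indep (V1 \<union> V2) (E1 \<union> E2) \<and> ?K i \<subseteq> I i"
      by blast
    have Isub: "\<forall>i\<in>{1..k}. I i \<subseteq> V1 \<union> V2" using I max_indep_sub by blast
    have "(\<Union>i\<in>{1..k}. I i) = V1 \<union> V2"
    proof
      show "(\<Union>i\<in>{1..k}. I i) \<subseteq> V1 \<union> V2" using Isub by blast
      show "V1 \<union> V2 \<subseteq> (\<Union>i\<in>{1..k}. I i)"
      proof
        fix x assume x: "x \<in> V1 \<union> V2"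
        show "x \<in> (\<Union>i\<in>{1..k}. I i)"
        proof (cases "x \<in> S")
          case True
          then obtain i where i: "i \<in> {1..k}" "x \<in> A i" using assms(7) by blast
          hence "x \<in> I i" using I by blast
          thus ?thesis using i by blast
        next
          case False
          show ?thesis
          proof (cases "x \<in> V1")
            case True
            then obtain i where i: "i \<in> {1..k}" "x \<in> J1 i" using U1 by blast
            hence "x \<in> I i" using I False by blast
            thus ?thesis using i by blast
          next
            case F2: False
            hence "x \<in> V2" using x by blast
            then obtain i where i: "i \<in> {1..k}" "x \<in> J2 i" using U2 by blast
            hence "x \<in> I i" using I False by blast
            thus ?thesis using i by blast
          qed
        qed
      qed
    qed
    moreover have "\<forall>i\<in>{1..k}. I i \<in> max_indep (V1 \<union> V2) (E1 \<union> E2) \<and> A i \<subseteq> I i"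
      using I by blast
    ultimately show "fHS (V1 \<union> V2) (E1 \<union> E2) S k A = 1" unfolding fHS_eq1 using assms(7)
      by blast
  }
qed

end
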